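(* Let $\Gamma$ be a gain operator on $\ell^\infty_+(\mathcal I)$ satisfying the $\oplus$-MBI property, and for $b\in\ell^\infty_+(\mathcal I)$ let $\Gamma^\oplus_b(s):=b\oplus\Gamma(s)$. Then for each $b\in\ell^\infty_+(\mathcal I)$ there exist fixed points $s_*(b)$ and $s^*(b)$ of $\Gamma^\oplus_b$ such that: (a) every $s\in\mathrm{Fix}(\Gamma^\oplus_b)$ satisfies $s_*(b)\le s\le s^*(b)$; (b) if $b^1\le b^2$ then $s_*(b^1)\le s_*(b^2)$ and $s^*(b^1)\le s^*(b^2)$; (c) for every $s\le s_*(b)$, $(\Gamma^\oplus_b)^n(s)\to s_*(b)$ weak$^*$; (d) for every $s\ge s^*(b)$, $(\Gamma^\oplus_b)^n(s)\to s^*(b)$ weak$^*$.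
   Context: Let $\mathcal I$ be a nonempty countable index set; $\ell^\infty_+(\mathcal I)$ is the cone of nonnegative real families $s=(s_i)_{i\in\mathcal I}$ with $\|s\|:=\sup_i|s_i|<\infty$, ordered componentwise; $\oplus$ is the componentwise maximum. A sequence in $\ell^\infty(\mathcal I)$ converges weak$^*$ (viewing $\ell^\infty=(\ell^1)^*$) iff it is norm-bounded and converges componentwise. $\mathcal K_\infty$: continuous strictly increasing unbounded $\gamma:\mathbb R_+\to\mathbb R_+$ with $\gamma(0)=0$. For $\mathcal J\subset\mathcal I$, $s_{|\mathcal J}$ agrees with $s$ on $\mathcal J$ and is $0$ elsewhere. Gain operator: for each $i$ a finite (possibly empty) $\mathcal I_i\subset\mathcal I\setminus\{i\}$; directed graph $\mathcal G$ with vertices $\mathcal I$ and edges $ji$, $j\in\mathcal I_i$; a pointwise equicontinuous family $\gamma_{ij}\in\mathcal K_\infty$ ($ji\in E(\mathcal G)$); functions $\mu_i:\ell^\infty_+(\mathcal I)\to[0,\infty]$ with (M1) some $\xi\in\mathcal K_\infty$ has $\mu_i(0)=0$, $\mu_i(s)\ge\xi(\|s\|)$; (M2) $\mu_i$ monotone; (M3) for each finite $\mathcal J$, $\mu_i$ restricted to vectors vanishing off $\mathcal J$ is finite-valued and continuous; (M4) for each norm-bounded $A$ and $\varepsilon>0$ there is $\delta>0$ with $\sup_i|\mu_i(s_{|\mathcal I_i})-\mu_i(s^0_{|\mathcal I_i})|\le\varepsilon$ whenever $s^0\in A$, $\|s-s^0\|\le\delta$. $\Gamma_i(s):=\mu_i([\gamma_{ij}(s_j)]_{j\in\mathcal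 I_i})$ (argument zero outside $\mathcal I_i$). $\oplus$-MBI property: there is $\varphi\in\mathcal K_\infty$ such that for all $s,b\in\ell^\infty_+(\mathcal I)$, $s\le b\oplus\Gamma(s)$ implies $\|s\|\le\varphi(\|b\|)$. $\mathrm{Fix}(T)$ denotes the fixed point set of $T$. *)

theory Defs
  imports "HOL-Analysis.Analysis"
begin


definition linf_pos :: "('i \<Rightarrow> real) set" where
  "linf_pos = {s. (\<forall>i. 0 \<le> s i) \<and> bdd_above (range (\<lambda>i. \<bar>s i\<bar>))}"

definition linf_norm :: "('i \<Rightarrow> real) \<Rightarrow> real" where
  "linf_norm s = (SUP i. \<bar>s i\<bar>)"

definition oplus :: "('i \<Rightarrow> real) \<Rightarrow> ('i \<Rightarrow> real) \<Rightarrow> ('i \<Rightarrow> real)" where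
  "oplus s t = (\<lambda>i. max (s i) (t i))"

definition restr :: "('i \<Rightarrow> real) \<Rightarrow> 'i set \<Rightarrow> ('i \<Rightarrow> real)" where
  "restr s J = (\<lambda>j. if j \<in> J then s j else 0)"

definition Kinf :: "(real \<Rightarrow> real) \<Rightarrow> bool" where
  "Kinf g \<longleftrightarrow> continuous_on {0..} g \<and> strict_mono_on {0..} g \<and> g 0 = 0
     \<and> (\<forall>r\<ge>0. g r \<ge> 0) \<and> (\<forall>M. \<exists>r\<ge>0. g r > M)"

definition weak_star_conv :: "(nat \<Rightarrow> 'i \<Rightarrow> real) \<Rightarrow> ('i \<Rightarrow> real) \<Rightarrow> bool" where
  "weak_star_conv f L \<longleftrightarrow> (\<exists>C. \<forall>n i. \<bar>f n i\<bar> \<le> C) \<and> (\<forall>i. (\<lambda>n. f n i) \<longlonglongrightarrow> L i)"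

definition gain_operator ::
  "('i \<Rightarrow> 'i set) \<Rightarrow> ('i \<Rightarrow> 'i \<Rightarrow> real \<Rightarrow> real) \<Rightarrow> ('i \<Rightarrow> ('i \<Rightarrow> real) \<Rightarrow> ereal) \<Rightarrow> bool" where
  "gain_operator Ii gam mu \<longleftrightarrow>
     (\<forall>i. finite (Ii i) \<and> i \<notin> Ii i)
   \<and> (\<forall>i. \<forall>j\<in>Ii i. Kinf (gam i j))
   \<comment> \<open>pointwise equicontinuity of the family\<close>
   \<and> (\<forall>r\<ge>0. \<forall>\<epsilon>>0. \<exists>\<delta>>0. \<forall>i. \<forall>j\<in>Ii i. \<forall>r'\<ge>0.
          \<bar>r' - r\<bar> < \<delta> \<longrightarrow> \<bar>gam i j r' - gam i j r\<bar> < \<epsilon>)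
   \<comment> \<open>values in [0,\<infinity>]\<close>
   \<and> (\<forall>i. \<forall>s\<in>linf_pos. 0 \<le> mu i s)
   \<comment> \<open>(M1)\<close>
   \<and> (\<exists>\<xi>. Kinf \<xi> \<and> (\<forall>i. mu i (\<lambda>_. 0) = 0 \<and> (\<forall>s\<in>linf_pos. ereal (\<xi> (linf_norm s)) \<le> mu i s)))
   \<comment> \<open>(M2)\<close>
   \<and> (\<forall>i. \<forall>s\<in>linf_pos. \<forall>t\<in>linf_pos. s \<le> t \<longrightarrow> mu i s \<le> mu i t)
   \<comment> \<open>(M3)\<close>
   \<and> (\<forall>i J. finite J \<longrightarrow>
        (\<forall>s\<in>linf_pos. (\<forall>j. j \<notin> J \<longrightarrow> s j = 0) \<longrightarrow>
           \<bar>mu i s\<bar> \<noteq> \<infinity> \<and>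
           (\<forall>\<epsilon>>0. \<exists>\<delta>>0. \<forall>t\<in>linf_pos. (\<forall>j. j \<notin> J \<longrightarrow> t j = 0) \<longrightarrow>
               linf_norm (\<lambda>j. t j - s j) < \<delta> \<longrightarrow>
               \<bar>real_of_ereal (mu i t) - real_of_ereal (mu i s)\<bar> < \<epsilon>)))
   \<comment> \<open>(M4)\<close>
   \<and> (\<forall>A \<subseteq> linf_pos. (\<exists>R. \<forall>s\<in>A. linf_norm s \<le> R) \<longrightarrow>
        (\<forall>\<epsilon>>0. \<exists>\<delta>>0. \<forall>s0\<in>A. \<forall>s\<in>linf_pos. linf_norm (\<lambda>j. s j - s0 j) \<le> \<delta> \<longrightarrow>
           (\<forall>i. \<bar>mu i (restr s (Ii i)) - mu i (restr s0 (Ii i))\<bar> \<le> ereal \<epsilon>)))"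

definition Gam ::
  "('i \<Rightarrow> 'i set) \<Rightarrow> ('i \<Rightarrow> 'i \<Rightarrow> real \<Rightarrow> real) \<Rightarrow> ('i \<Rightarrow> ('i \<Rightarrow> real) \<Rightarrow> ereal)
     \<Rightarrow> ('i \<Rightarrow> real) \<Rightarrow> ('i \<Rightarrow> real)" where
  "Gam Ii gam mu s = (\<lambda>i. real_of_ereal (mu i (\<lambda>j. if j \<in> Ii i then gam i j (s j) else 0)))"

definition MBI_oplus ::
  "('i \<Rightarrow> 'i set) \<Rightarrow> ('i \<Rightarrow> 'i \<Rightarrow> real \<Rightarrow> real) \<Rightarrow> ('i \<Rightarrow> ('i \<Rightarrow> real) \<Rightarrow> ereal) \<Rightarrow> bool" where
  "MBI_oplus Ii gam mu \<longleftrightarrow> (\<exists>\<phi>. Kinf \<phi> \<and>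
     (\<forall>s\<in>linf_pos. \<forall>b\<in>linf_pos. s \<le> oplus b (Gam Ii gam mu s) \<longrightarrow>
        linf_norm s \<le> \<phi> (linf_norm b)))"

definition Gam_b ::
  "('i \<Rightarrow> 'i set) \<Rightarrow> ('i \<Rightarrow> 'i \<Rightarrow> real \<Rightarrow> real) \<Rightarrow> ('i \<Rightarrow> ('i \<Rightarrow> real) \<Rightarrow> ereal)
     \<Rightarrow> ('i \<Rightarrow> real) \<Rightarrow> ('i \<Rightarrow> real) \<Rightarrow> ('i \<Rightarrow> real)" where
  "Gam_b Ii gam mu b s = oplus b (Gam Ii gam mu s)"

definition Fix_pos :: "(('i \<Rightarrow> real) \<Rightarrow> ('i \<Rightarrow> real)) \<Rightarrow> ('i \<Rightarrow> real) set" where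
  "Fix_pos T = {s \<in> linf_pos. T s = s}"

end

theory Submission
  imports Defs
begin



lemma linf_posI: "(\<And>i. 0 \<le> s i) \<Longrightarrow> (\<And>i. s i \<le> K) \<Longrightarrow> s \<in> linf_pos"
  unfolding linf_pos_def bdd_above_def by (auto intro!: exI[of _ K])

lemma linf_pos_nonneg: "s \<in> linf_pos \<Longrightarrow> 0 \<le> s i"
  unfolding linf_pos_def by auto

lemma linf_pos_bdd: "s \<in> linf_pos \<Longrightarrow> \<exists>K. \<forall>i. s i \<le> K"
  unfolding linf_pos_def bdd_above_def by (fastforce)

lemma linf_norm_le: "(\<And>j. \<bar>f j\<bar> \<le> c) \<Longrightarrow> linf_norm f \<le> c"
  unfolding linf_norm_def by (rule cSUP_least) auto

lemma linf_norm_ge: "s \<in> linf_pos \<Longrightarrow> s i \<le> linf_norm s"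
  unfolding linf_norm_def linf_pos_def
proof -
  assume a: "s \<in> {s. (\<forall>i. 0 \<le> s i) \<and> bdd_above (range (\<lambda>i. \<bar>s i\<bar>))}"
  have "\<bar>s i\<bar> \<le> (SUP i. \<bar>s i\<bar>)" using a by (intro cSUP_upper) auto
  then show "s i \<le> (SUP i. \<bar>s i\<bar>)" by linarith
qed

lemma Kinf_nonneg: "Kinf g \<Longrightarrow> 0 \<le> r \<Longrightarrow> 0 \<le> g r"
  unfolding Kinf_def by auto

lemma Kinf_mono: "Kinf g \<Longrightarrow> 0 \<le> r \<Longrightarrow> r \<le> r' \<Longrightarrow> g r \<le> g r'"
  unfolding Kinf_def by (auto intro: strict_mono_on_leD)

lemma Kinf_cont: "Kinf g \<Longrightarrow> continuous_on {0..} g"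
  unfolding Kinf_def by auto

locale GO =
  fixes Ii :: "'i \<Rightarrow> 'i set" and gam :: "'i \<Rightarrow> 'i \<Rightarrow> real \<Rightarrow> real"
    and mu :: "'i \<Rightarrow> ('i \<Rightarrow> real) \<Rightarrow> ereal"
  assumes go: "gain_operator Ii gam mu"
begin

lemma fin: "finite (Ii i)" using go unfolding gain_operator_def by auto
lemma Kg: "j \<in> Ii i \<Longrightarrow> Kinf (gam i j)" using go unfolding gain_operator_def by auto
lemma M0: "s \<in> linf_pos \<Longrightarrow> 0 \<le> mu i s" using go[unfolded gain_operator_def, THEN conjunct2, THEN conjunct2, THEN conjunct2, THEN conjunct1] by blast
lemma M2: "s \<in> linf_pos \<Longrightarrow> t \<in> linf_pos \<Longrightarrow> s \<le> t \<Longrightarrow> mu i s \<le> mu i t"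
  using go[unfolded gain_operator_def, THEN conjunct2, THEN conjunct2, THEN conjunct2, THEN conjunct2, THEN conjunct2, THEN conjunct1] by blast
lemma M3: "finite J \<Longrightarrow> s \<in> linf_pos \<Longrightarrow> (\<forall>j. j \<notin> J \<longrightarrow> s j = 0) \<Longrightarrow>
           \<bar>mu i s\<bar> \<noteq> \<infinity> \<and>
           (\<forall>\<epsilon>>0. \<exists>\<delta>>0. \<forall>t\<in>linf_pos. (\<forall>j. j \<notin> J \<longrightarrow> t j = 0) \<longrightarrow>
               linf_norm (\<lambda>j. t j - s j) < \<delta> \<longrightarrow>
               \<bar>real_of_ereal (mu i t) - real_of_ereal (mu i s)\<bar> < \<epsilon>)"
proof -
  assume a: "finite J" "s \<in> linf_pos" "\<forall>j. j \<notin> J \<longrightarrow> s j = 0"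
  note c = go[unfolded gain_operator_def, THEN conjunct2, THEN conjunct2, THEN conjunct2, THEN conjunct2, THEN conjunct2, THEN conjunct2, THEN conjunct1]
  have c1: "finite J \<longrightarrow> (\<forall>s\<in>linf_pos. (\<forall>j. j \<notin> J \<longrightarrow> s j = 0) \<longrightarrow>
           \<bar>mu i s\<bar> \<noteq> \<infinity> \<and>
           (\<forall>\<epsilon>>0. \<exists>\<delta>>0. \<forall>t\<in>linf_pos. (\<forall>j. j \<notin> J \<longrightarrow> t j = 0) \<longrightarrow>
               linf_norm (\<lambda>j. t j - s j) < \<delta> \<longrightarrow>
               \<bar>real_of_ereal (mu i t) - real_of_ereal (mu i s)\<bar> < \<epsilon>))"
    using c by (rule allE[of _ i]) (rule allE[of _ J])
  note c2 = mp[OF c1 a(1)]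
  show ?thesis using mp[OF bspec[OF c2 a(2)] a(3)] .
qed

definition V :: "('i \<Rightarrow> real) \<Rightarrow> 'i \<Rightarrow> 'i \<Rightarrow> real" where
  "V s i = (\<lambda>j. if j \<in> Ii i then gam i j (s j) else 0)"

lemma Gam_V: "Gam Ii gam mu s i = real_of_ereal (mu i (V s i))"
  unfolding Gam_def V_def by simp

lemma V_pos: assumes "\<And>j. 0 \<le> s j" shows "V s i \<in> linf_pos"
proof (rule linf_posI)
  fix j show "0 \<le> V s i j" unfolding V_def using assms Kg Kinf_nonneg by auto
  show "V s i j \<le> (\<Sum>j\<in>Ii i. gam i j (s j))"
    unfolding V_def using assms Kg Kinf_nonneg fin
    by (auto intro!: member_le_sum sum_nonneg)
qed

lemma V_supp: "j \<notin> Ii i \<Longrightarrow> V s i j = 0" unfolding V_def by auto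

lemma mu_V_fin: assumes "\<And>j. 0 \<le> s j" shows "\<bar>mu i (V s i)\<bar> \<noteq> \<infinity>"
proof -
  have a2: "\<forall>j. j \<notin> Ii i \<longrightarrow> V s i j = 0" using V_supp by blast
  have a1: "V s i \<in> linf_pos" by (rule V_pos) (rule assms)
  show ?thesis using M3[OF fin a1 a2] by (rule conjunct1)
qed

lemma Gam_nonneg: assumes "\<And>j. 0 \<le> s j" shows "0 \<le> Gam Ii gam mu s i"
  unfolding Gam_V using M0[OF V_pos[OF assms]] by (simp add: real_of_ereal_pos)

lemma Gam_mono: assumes "\<And>j. 0 \<le> s j" "s \<le> t" shows "Gam Ii gam mu s i \<le> Gam Ii gam mu t i"
proof -
  have t: "\<And>j. 0 \<le> t j" using assms by (meson le_fun_def order_trans)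
  have "V s i \<le> V t i" unfolding V_def le_fun_def using assms Kg Kinf_mono
    by (auto simp: le_fun_def)
  moreover have "V s i \<in> linf_pos" by (rule V_pos) (rule assms(1))
  moreover have "V t i \<in> linf_pos" by (rule V_pos) (rule t)
  ultimately have "mu i (V s i) \<le> mu i (V t i)" by (intro M2)
  moreover have "0 \<le> mu i (V s i)" by (intro M0 V_pos assms(1))
  moreover have "\<bar>mu i (V t i)\<bar> \<noteq> \<infinity>" by (rule mu_V_fin) (rule t)
  moreover have "mu i (V t i) \<noteq> \<infinity>" using \<open>\<bar>mu i (V t i)\<bar> \<noteq> \<infinity>\<close> by auto
  ultimately show ?thesis unfolding Gam_V
    by (intro real_of_ereal_positive_mono) auto
qed

end


context GO begin

lemma Gam_cont:
  assumes x: "\<And>n j. 0 \<le> x n j" and y: "\<And>j. 0 \<le> y j" and c: "\<And>j. (\<lambda>n. x n j) \<longlonglongrightarrow> y j"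
  shows "(\<lambda>n. Gam Ii gam mu (x n) i) \<longlonglongrightarrow> Gam Ii gam mu y i"
proof -
  have sy: "\<forall>j. j \<notin> Ii i \<longrightarrow> V y i j = 0" using V_supp by blast
  have py: "V y i \<in> linf_pos" by (rule V_pos) (rule y)
  note M = M3[OF fin py sy]
  have conv: "\<forall>j\<in>Ii i. (\<lambda>n. gam i j (x n j)) \<longlonglongrightarrow> gam i j (y j)"
  proof
    fix j assume "j \<in> Ii i"
    then show "(\<lambda>n. gam i j (x n j)) \<longlonglongrightarrow> gam i j (y j)"
    proof -
      assume jj: "j \<in> Ii i"
      have h1: "continuous_on {0..} (gam i j)" using Kinf_cont[OF Kg[OF jj]] .
      have h3: "y j \<in> {0..}" using y by simp
      have h4: "\<forall>\<^sub>F n in sequentially. x n j \<in> {0..}" using x by simp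
      show ?thesis by (rule continuous_on_tendsto_compose[OF h1 c h3 h4])
    qed
  qed
  show ?thesis unfolding tendsto_iff
  proof (intro allI impI)
    fix e :: real assume e: "0 < e"
    then obtain d where d: "d > 0" and dd: "\<forall>t\<in>linf_pos. (\<forall>j. j \<notin> Ii i \<longrightarrow> t j = 0) \<longrightarrow>
               linf_norm (\<lambda>j. t j - V y i j) < d \<longrightarrow>
               \<bar>real_of_ereal (mu i t) - real_of_ereal (mu i (V y i))\<bar> < e"
      using conjunct2[OF M, rule_format, OF e] by blast
    have "\<forall>j\<in>Ii i. eventually (\<lambda>n. \<bar>gam i j (x n j) - gam i j (y j)\<bar> < d/2) sequentially"
    proof
      fix j assume "j \<in> Ii i"
      then have "(\<lambda>n. gam i j (x n j)) \<longlonglongrightarrow> gam i j (y j)" using conv by blast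
      moreover have "d/2 > 0" using d by simp
      ultimately show "eventually (\<lambda>n. \<bar>gam i j (x n j) - gam i j (y j)\<bar> < d/2) sequentially"
        unfolding tendsto_iff dist_real_def by blast
    qed
    then have "eventually (\<lambda>n. \<forall>j\<in>Ii i. \<bar>gam i j (x n j) - gam i j (y j)\<bar> < d/2) sequentially"
      by (rule eventually_ball_finite[OF fin])
    then show "eventually (\<lambda>n. dist (Gam Ii gam mu (x n) i) (Gam Ii gam mu y i) < e) sequentially"
    proof (rule eventually_mono)
      fix n assume a: "\<forall>j\<in>Ii i. \<bar>gam i j (x n j) - gam i j (y j)\<bar> < d/2"
      have "linf_norm (\<lambda>j. V (x n) i j - V y i j) \<le> d/2"
        using a d by (intro linf_norm_le) (auto simp: V_def less_imp_le)
      then have n3: "linf_norm (\<lambda>j. V (x n) i j - V y i j) < d" using d by linarith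
      have n1: "V (x n) i \<in> linf_pos" by (rule V_pos) (rule x)
      have n2: "\<forall>j. j \<notin> Ii i \<longrightarrow> V (x n) i j = 0" using V_supp by blast
      have "\<bar>real_of_ereal (mu i (V (x n) i)) - real_of_ereal (mu i (V y i))\<bar> < e"
        using dd n1 n2 n3 by blast
      then show "dist (Gam Ii gam mu (x n) i) (Gam Ii gam mu y i) < e"
        by (simp add: Gam_V dist_real_def)
    qed
  qed
qed

end



locale GOM = GO +
  assumes mbi: "MBI_oplus Ii gam mu"
begin

abbreviation "G \<equiv> Gam Ii gam mu"
abbreviation "Gb b \<equiv> Gam_b Ii gam mu b"

lemma Gb_eq: "Gb b s i = max (b i) (G s i)"
  unfolding Gam_b_def oplus_def by simp

lemma Gb_nonneg: "(\<And>j. 0 \<le> s j) \<Longrightarrow> 0 \<le> Gb b s i"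
  unfolding Gb_eq using Gam_nonneg by (meson max.coboundedI2)

lemma Gb_mono: assumes "\<And>j. 0 \<le> s j" "s \<le> t" "b \<le> b'" shows "Gb b s \<le> Gb b' t"
  unfolding le_fun_def Gb_eq
proof
  fix i
  have "G s i \<le> G t i" by (rule Gam_mono[OF assms(1,2)])
  moreover have "b i \<le> b' i" using assms(3) by (simp add: le_fun_def)
  ultimately show "max (b i) (G s i) \<le> max (b' i) (G t i)" by (rule max.mono[rotated])
qed

lemma iter_nonneg: "(\<And>j. 0 \<le> s j) \<Longrightarrow> 0 \<le> (Gb b ^^ n) s i"
proof (induction n arbitrary: i)
  case 0 then show ?case by simp
next
  case (Suc n) then show ?case by (simp add: Gb_nonneg)
qed

lemma iter_mono: assumes "\<And>j. 0 \<le> s j" "s \<le> t" "b \<le> b'"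
  shows "(Gb b ^^ n) s \<le> (Gb b' ^^ n) t"
proof (induction n)
  case 0 then show ?case using assms by simp
next
  case (Suc n)
  have "Gb b ((Gb b ^^ n) s) \<le> Gb b' ((Gb b' ^^ n) t)"
    by (rule Gb_mono[OF iter_nonneg[OF assms(1)] Suc assms(3)])
  then show ?case by simp
qed

lemma iter_fix: "Gb b u = u \<Longrightarrow> (Gb b ^^ n) u = u"
  by (induction n) auto

lemma bound: assumes c: "c \<in> linf_pos"
  shows "\<exists>K\<ge>0. \<forall>s\<in>linf_pos. s \<le> oplus c (G s) \<longrightarrow> (\<forall>i. s i \<le> K)"
proof -
  obtain phi where ph: "\<forall>s\<in>linf_pos. \<forall>b\<in>linf_pos. s \<le> oplus b (G s) \<longrightarrow>
        linf_norm s \<le> phi (linf_norm b)"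
    using mbi unfolding MBI_oplus_def by blast
  show ?thesis
  proof (intro exI[of _ "max 0 (phi (linf_norm c))"] conjI ballI impI allI)
    fix s i assume s: "s \<in> linf_pos" and le: "s \<le> oplus c (G s)"
    have "s i \<le> linf_norm s" by (rule linf_norm_ge[OF s])
    also have "\<dots> \<le> phi (linf_norm c)" using ph s c le by blast
    finally show "s i \<le> max 0 (phi (linf_norm c))" by simp
  qed simp
qed

lemma trunc:
  assumes c: "c \<in> linf_pos" and K: "\<forall>s\<in>linf_pos. s \<le> oplus c (G s) \<longrightarrow> (\<forall>i. s i \<le> K)"
    and y: "y \<in> linf_pos" "\<And>i. y i \<le> K" and w: "\<And>i. 0 \<le> w i" "y \<le> w" "w \<le> oplus c (G y)"
  shows "w i \<le> K"
proof (rule ccontr)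
  assume nle: "\<not> w i \<le> K"
  define w' where "w' = (\<lambda>i. min (w i) (K + 1))"
  have yn: "\<And>j. 0 \<le> y j" using linf_pos_nonneg[OF y(1)] .
  have K0: "0 \<le> K" using yn[of i] y(2)[of i] by linarith
  have w'p: "w' \<in> linf_pos" unfolding w'_def
    by (rule linf_posI[where K="K+1"]) (use w(1) K0 in auto)
  have yw': "y \<le> w'" unfolding w'_def le_fun_def using w(2) y(2)
    by (auto simp: le_fun_def) (smt (verit) y(2))
  have "w' \<le> oplus c (G w')"
    unfolding le_fun_def
  proof
    fix j
    have "w' j \<le> w j" unfolding w'_def by simp
    also have "\<dots> \<le> max (c j) (G y j)" using w(3) by (simp add: le_fun_def oplus_def)
    also have "\<dots> \<le> max (c j) (G w' j)" using Gam_mono[OF yn yw', of j] by simp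
    finally show "w' j \<le> oplus c (G w') j" by (simp add: oplus_def)
  qed
  then have "w' i \<le> K" using K w'p by blast
  then show False using nle unfolding w'_def by linarith
qed

lemma upward:
  assumes c: "c \<in> linf_pos" and x0: "x0 \<in> linf_pos" "x0 \<le> c"
  shows "\<exists>K. \<forall>n. (Gb c ^^ n) x0 \<in> linf_pos \<and> (Gb c ^^ n) x0 \<le> (Gb c ^^ Suc n) x0
              \<and> (\<forall>i. (Gb c ^^ n) x0 i \<le> K)"
proof -
  obtain K where K0: "K \<ge> 0" and K: "\<forall>s\<in>linf_pos. s \<le> oplus c (G s) \<longrightarrow> (\<forall>i. s i \<le> K)"
    using bound[OF c] by blast
  have x0n: "\<And>j. 0 \<le> x0 j" using linf_pos_nonneg[OF x0(1)] .
  have inc: "(Gb c ^^ n) x0 \<le> (Gb c ^^ Suc n) x0" for n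
  proof (induction n)
    case 0
    have "x0 \<le> Gb c x0" unfolding le_fun_def
    proof
      fix j have "x0 j \<le> c j" using x0(2) by (simp add: le_fun_def)
      then show "x0 j \<le> Gb c x0 j" unfolding Gb_eq by linarith
    qed
    then show ?case by simp
  next
    case (Suc n)
    have "Gb c ((Gb c ^^ n) x0) \<le> Gb c ((Gb c ^^ Suc n) x0)"
      by (rule Gb_mono[OF iter_nonneg[OF x0n] Suc order_refl])
    then show ?case by simp
  qed
  have bd: "\<forall>i. (Gb c ^^ n) x0 i \<le> K" for n
  proof (induction n)
    case 0
    have "x0 \<le> oplus c (G x0)" unfolding le_fun_def
    proof
      fix j have "x0 j \<le> c j" using x0(2) by (simp add: le_fun_def)
      then show "x0 j \<le> oplus c (G x0) j" unfolding oplus_def by linarith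
    qed
    then show ?case using K x0(1) by simp
  next
    case (Suc n)
    have yp: "(Gb c ^^ n) x0 \<in> linf_pos"
      by (rule linf_posI[where K=K]) (use iter_nonneg[OF x0n] Suc in auto)
    show ?case
    proof
      fix i
      show "(Gb c ^^ Suc n) x0 i \<le> K"
      proof (rule trunc[OF c K yp])
        show "\<And>i. (Gb c ^^ n) x0 i \<le> K" using Suc by blast
        show "\<And>i. 0 \<le> (Gb c ^^ Suc n) x0 i" by (rule iter_nonneg[OF x0n])
        show "(Gb c ^^ n) x0 \<le> (Gb c ^^ Suc n) x0" by (rule inc)
        show "(Gb c ^^ Suc n) x0 \<le> oplus c (G ((Gb c ^^ n) x0))"
          by (simp add: Gam_b_def)
      qed
    qed
  qed
  show ?thesis
  proof (intro exI[of _ K] allI conjI)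
    fix n
    show "(Gb c ^^ n) x0 \<in> linf_pos"
      by (rule linf_posI[where K=K]) (use iter_nonneg[OF x0n] bd in auto)
  qed (use inc bd in auto)
qed

end


context GOM begin

definition slow where
  "slow b = (\<lambda>i. SUP n. (Gam_b Ii gam mu b ^^ n) (\<lambda>_. 0) i)"

lemma zero_pos: "(\<lambda>_. 0) \<in> linf_pos" by (rule linf_posI[where K=0]) auto

lemma slow_props:
  assumes b: "b \<in> linf_pos"
  shows "slow b \<in> linf_pos" "Gb b (slow b) = slow b"
    "\<And>n i. (Gb b ^^ n) (\<lambda>_. 0) i \<le> slow b i"
    "\<And>i. (\<lambda>n. (Gb b ^^ n) (\<lambda>_. 0) i) \<longlonglongrightarrow> slow b i"
    "\<And>s. s \<in> Fix_pos (Gb b) \<Longrightarrow> slow b \<le> s"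
proof -
  define a where "a n = (Gb b ^^ n) (\<lambda>_. 0)" for n
  have b0: "(\<lambda>_. 0) \<le> b" using linf_pos_nonneg[OF b] by (simp add: le_fun_def)
  obtain K where K: "\<And>n. a n \<in> linf_pos" "\<And>n. a n \<le> a (Suc n)" "\<And>n i. a n i \<le> K"
    using upward[OF b zero_pos b0] unfolding a_def by blast
  have bdd: "bdd_above (range (\<lambda>n. a n i))" for i using K(3) by (auto simp: bdd_above_def)
  have inc: "incseq (\<lambda>n. a n i)" for i
    by (rule incseq_SucI) (use K(2) in \<open>simp add: le_fun_def\<close>)
  have sl: "slow b i = (SUP n. a n i)" for i unfolding slow_def a_def by simp
  have up: "a n i \<le> slow b i" for n i unfolding sl by (rule cSUP_upper[OF _ bdd]) simp
  then show "\<And>n i. (Gb b ^^ n) (\<lambda>_. 0) i \<le> slow b i" unfolding a_def .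
  have lim: "(\<lambda>n. a n i) \<longlonglongrightarrow> slow b i" for i unfolding sl by (rule LIMSEQ_incseq_SUP[OF bdd inc])
  then show "\<And>i. (\<lambda>n. (Gb b ^^ n) (\<lambda>_. 0) i) \<longlonglongrightarrow> slow b i" unfolding a_def .
  have sn: "0 \<le> slow b i" for i using up[of 0 i] by (simp add: a_def)
  have sK: "slow b i \<le> K" for i unfolding sl by (rule cSUP_least) (use K(3) in auto)
  show sp: "slow b \<in> linf_pos" by (rule linf_posI[where K=K]) (use sn sK in auto)
  have an: "\<And>n j. 0 \<le> a n j" by (rule linf_pos_nonneg[OF K(1)])
  show fx: "Gb b (slow b) = slow b"
  proof
    fix i
    have "(\<lambda>n. a (Suc n) i) \<longlonglongrightarrow> slow b i" using lim LIMSEQ_Suc by blast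
    moreover have "(\<lambda>n. a (Suc n) i) \<longlonglongrightarrow> Gb b (slow b) i"
    proof -
      have "(\<lambda>n. max (b i) (G (a n) i)) \<longlonglongrightarrow> max (b i) (G (slow b) i)"
        by (intro tendsto_max tendsto_const Gam_cont[OF an sn lim])
      then show ?thesis by (simp add: a_def Gb_eq)
    qed
    ultimately show "Gb b (slow b) i = slow b i" using LIMSEQ_unique by metis
  qed
  fix s assume "s \<in> Fix_pos (Gb b)"
  then have s: "s \<in> linf_pos" "Gb b s = s" unfolding Fix_pos_def by auto
  have sn': "\<And>j. 0 \<le> s j" using linf_pos_nonneg[OF s(1)] .
  have "a n \<le> s" for n
  proof (induction n)
    case 0 then show ?case using sn' by (simp add: a_def le_fun_def)
  next
    case (Suc n)
    have "Gb b (a n) \<le> Gb b s" by (rule Gb_mono[OF an Suc order_refl])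
    then show ?case using s(2) by (simp add: a_def)
  qed
  then show "slow b \<le> s" unfolding le_fun_def sl
    by (auto intro!: cSUP_least simp: le_fun_def)
qed

lemma slow_conv:
  assumes b: "b \<in> linf_pos" and s: "s \<in> linf_pos" "s \<le> slow b"
  shows "weak_star_conv (\<lambda>n. (Gb b ^^ n) s) (slow b)"
proof -
  note P = slow_props[OF b]
  obtain K where K: "\<forall>i. slow b i \<le> K" using linf_pos_bdd[OF P(1)] by blast
  have sn: "\<And>j. 0 \<le> s j" using linf_pos_nonneg[OF s(1)] .
  have lo: "(Gb b ^^ n) (\<lambda>_. 0) \<le> (Gb b ^^ n) s" for n
    by (rule iter_mono) (use sn in \<open>auto simp: le_fun_def\<close>)
  have hi: "(Gb b ^^ n) s \<le> slow b" for n
  proof -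
    have "(Gb b ^^ n) s \<le> (Gb b ^^ n) (slow b)" by (rule iter_mono[OF sn s(2) order_refl])
    then show ?thesis using iter_fix[OF P(2)] by simp
  qed
  show ?thesis unfolding weak_star_conv_def
  proof (intro conjI exI allI)
    fix n i
    have "0 \<le> (Gb b ^^ n) s i" by (rule iter_nonneg[OF sn])
    moreover have "(Gb b ^^ n) s i \<le> slow b i" using hi[of n] by (simp add: le_fun_def)
    moreover have "slow b i \<le> K" using K by simp
    ultimately show "\<bar>(Gb b ^^ n) s i\<bar> \<le> K" by linarith
  next
    fix i
    show "(\<lambda>n. (Gb b ^^ n) s i) \<longlonglongrightarrow> slow b i"
    proof (rule tendsto_sandwich[OF _ _ P(4)[of i] tendsto_const])
      show "\<forall>\<^sub>F n in sequentially. (Gb b ^^ n) (\<lambda>_. 0) i \<le> (Gb b ^^ n) s i"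
        using lo by (simp add: le_fun_def)
      show "\<forall>\<^sub>F n in sequentially. (Gb b ^^ n) s i \<le> slow b i"
        using hi by (simp add: le_fun_def)
    qed
  qed
qed

lemma slow_mono:
  assumes b: "b1 \<in> linf_pos" "b2 \<in> linf_pos" "b1 \<le> b2"
  shows "slow b1 \<le> slow b2"
proof -
  have "(Gb b1 ^^ n) (\<lambda>_. 0) \<le> (Gb b2 ^^ n) (\<lambda>_. 0)" for n
    by (rule iter_mono[OF _ order_refl b(3)]) simp
  then have "(Gb b1 ^^ n) (\<lambda>_. 0) i \<le> slow b2 i" for n i
  proof -
    have "(Gb b1 ^^ n) (\<lambda>_. 0) i \<le> (Gb b2 ^^ n) (\<lambda>_. 0) i"
      using \<open>(Gb b1 ^^ n) (\<lambda>_. 0) \<le> (Gb b2 ^^ n) (\<lambda>_. 0)\<close> by (simp add: le_fun_def)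
    also have "\<dots> \<le> slow b2 i" by (rule slow_props(3)[OF b(2)])
    finally show ?thesis .
  qed
  then show ?thesis unfolding le_fun_def slow_def[of b1]
    by (auto intro!: cSUP_least)
qed

end


context GOM begin

definition PP where "PP b = {s \<in> linf_pos. s \<le> Gam_b Ii gam mu b s}"
definition supp where "supp b = (\<lambda>i. SUP s\<in>PP b. s i)"

lemma supp_props:
  assumes b: "b \<in> linf_pos"
  shows "supp b \<in> linf_pos" "Gb b (supp b) = supp b"
    "\<And>s. s \<in> PP b \<Longrightarrow> s \<le> supp b"
proof -
  obtain K where K0: "K \<ge> 0" and K: "\<forall>s\<in>linf_pos. s \<le> oplus b (G s) \<longrightarrow> (\<forall>i. s i \<le> K)"
    using bound[OF b] by blast
  have z: "(\<lambda>_. 0) \<in> PP b" unfolding PP_def using zero_pos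
    by (auto simp: le_fun_def intro: Gb_nonneg)
  have PK: "s i \<le> K" if "s \<in> PP b" for s i
  proof -
    have "s \<in> linf_pos" "s \<le> oplus b (G s)" using that unfolding PP_def Gam_b_def by auto
    then show ?thesis using K by blast
  qed
  have ne: "PP b \<noteq> {}" using z by blast
  have bdd: "bdd_above ((\<lambda>s. s i) ` PP b)" for i using PK by (auto simp: bdd_above_def)
  have upp: "s i \<le> supp b i" if "s \<in> PP b" for s i
    unfolding supp_def by (rule cSUP_upper[OF that bdd])
  then show "\<And>s. s \<in> PP b \<Longrightarrow> s \<le> supp b" by (simp add: le_fun_def)
  have un: "0 \<le> supp b i" for i using upp[OF z, of i] by simp
  have uK: "supp b i \<le> K" for i unfolding supp_def by (rule cSUP_least[OF ne]) (use PK in auto)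
  show up: "supp b \<in> linf_pos" by (rule linf_posI[where K=K]) (use un uK in auto)
  have uu: "supp b \<le> Gb b (supp b)" unfolding le_fun_def
  proof
    fix i show "supp b i \<le> Gb b (supp b) i" unfolding supp_def[of b, THEN fun_cong[where x=i]]
    proof (rule cSUP_least[OF ne])
      fix s assume s: "s \<in> PP b"
      have sp: "s \<in> linf_pos" "s \<le> Gb b s" using s unfolding PP_def by auto
      have "s i \<le> Gb b s i" using sp(2) by (simp add: le_fun_def)
      also have "Gb b s \<le> Gb b (supp b)"
        by (rule Gb_mono[OF linf_pos_nonneg[OF sp(1)] _ order_refl]) (use upp s in \<open>simp add: le_fun_def\<close>)
      then have "Gb b s i \<le> Gb b (supp b) i" by (simp add: le_fun_def)
      finally show "s i \<le> Gb b (supp b) i" .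
    qed
  qed
  have wK: "Gb b (supp b) i \<le> K" for i
  proof (rule trunc[OF b K up])
    show "\<And>i. supp b i \<le> K" by (rule uK)
    show "\<And>i. 0 \<le> Gb b (supp b) i" by (rule Gb_nonneg[OF un])
    show "supp b \<le> Gb b (supp b)" by (rule uu)
    show "Gb b (supp b) \<le> oplus b (G (supp b))" by (simp add: Gam_b_def)
  qed
  have wp: "Gb b (supp b) \<in> linf_pos"
    by (rule linf_posI[where K=K]) (use wK Gb_nonneg[OF un] in auto)
  have "Gb b (supp b) \<le> Gb b (Gb b (supp b))"
    by (rule Gb_mono[OF un uu order_refl])
  then have "Gb b (supp b) \<in> PP b" using wp unfolding PP_def by blast
  then have "Gb b (supp b) \<le> supp b" using upp by (simp add: le_fun_def)
  then show "Gb b (supp b) = supp b" using uu by (rule order.antisym)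
qed

lemma Fix_PP: "s \<in> Fix_pos (Gb b) \<Longrightarrow> s \<in> PP b"
  unfolding Fix_pos_def PP_def by auto

lemma supp_mono:
  assumes b: "b1 \<in> linf_pos" "b2 \<in> linf_pos" "b1 \<le> b2"
  shows "supp b1 \<le> supp b2"
proof -
  have sub: "s \<in> PP b2" if "s \<in> PP b1" for s
  proof -
    have sp: "s \<in> linf_pos" "s \<le> Gb b1 s" using that unfolding PP_def by auto
    have "Gb b1 s \<le> Gb b2 s" by (rule Gb_mono[OF linf_pos_nonneg[OF sp(1)] order_refl b(3)])
    then show ?thesis using sp unfolding PP_def by auto
  qed
  have z: "(\<lambda>_. 0) \<in> PP b1" unfolding PP_def using zero_pos
    by (auto simp: le_fun_def intro: Gb_nonneg)
  show ?thesis unfolding le_fun_def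
  proof
    fix i show "supp b1 i \<le> supp b2 i" unfolding supp_def[of b1, THEN fun_cong[where x=i]]
    proof (rule cSUP_least)
      show "PP b1 \<noteq> {}" using z by blast
      fix s assume "s \<in> PP b1"
      then have "s \<le> supp b2" using supp_props(3)[OF b(2)] sub by blast
      then show "s i \<le> supp b2 i" by (simp add: le_fun_def)
    qed
  qed
qed

end


context GOM begin

lemma supp_conv:
  assumes b: "b \<in> linf_pos" and s: "s \<in> linf_pos" "supp b \<le> s"
  shows "weak_star_conv (\<lambda>n. (Gb b ^^ n) s) (supp b)"
proof -
  note P = supp_props[OF b]
  define u where "u = supp b"
  define x where "x n = (Gb b ^^ n) s" for n
  have sn: "\<And>j. 0 \<le> s j" using linf_pos_nonneg[OF s(1)] .
  have bn: "\<And>j. 0 \<le> b j" using linf_pos_nonneg[OF b] .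
  define c where "c = oplus s b"
  obtain Ks where Ks: "\<forall>i. s i \<le> Ks" using linf_pos_bdd[OF s(1)] by blast
  obtain Kb where Kb: "\<forall>i. b i \<le> Kb" using linf_pos_bdd[OF b] by blast
  have cp: "c \<in> linf_pos" unfolding c_def oplus_def
    by (rule linf_posI[where K="max Ks Kb"]) (use sn Ks Kb in \<open>auto intro: max.mono max.coboundedI1 max.coboundedI2\<close>)
  have sc: "s \<le> c" unfolding c_def oplus_def le_fun_def by simp
  have bc: "b \<le> c" unfolding c_def oplus_def le_fun_def by simp
  obtain K where K: "\<And>n. (Gb c ^^ n) s \<in> linf_pos" "\<And>n i. (Gb c ^^ n) s i \<le> K"
    using upward[OF cp s(1) sc] by blast
  have xn: "\<And>n j. 0 \<le> x n j" unfolding x_def by (rule iter_nonneg[OF sn])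
  have xh: "x n \<le> (Gb c ^^ n) s" for n unfolding x_def by (rule iter_mono[OF sn order_refl bc])
  have xK: "x n i \<le> K" for n i
  proof -
    have "x n i \<le> (Gb c ^^ n) s i" using xh[of n] by (simp add: le_fun_def)
    then show ?thesis using K(2)[of n i] by linarith
  qed
  have un: "\<And>j. 0 \<le> u j" unfolding u_def using linf_pos_nonneg[OF P(1)] .
  have xu: "u \<le> x n" for n
  proof -
    have "(Gb b ^^ n) u \<le> (Gb b ^^ n) s" by (rule iter_mono[OF un _ order_refl]) (use s(2) u_def in simp)
    then show ?thesis using iter_fix[OF P(2)] unfolding x_def u_def by simp
  qed
  have xu': "u i \<le> x n i" for n i using xu[of n] by (simp add: le_fun_def)
  define T where "T n i = (SUP k\<in>{n..}. x k i)" for n i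
  have bddT: "bdd_above ((\<lambda>k. x k i) ` {n..})" for n i using xK by (auto simp: bdd_above_def)
  have xT: "x k i \<le> T n i" if "n \<le> k" for n k i
    unfolding T_def by (rule cSUP_upper[OF _ bddT]) (use that in simp)
  have TK: "T n i \<le> K" for n i unfolding T_def by (rule cSUP_least) (use xK in auto)
  have uT: "u i \<le> T n i" for n i using xu'[of i n] xT[of n n i] by simp
  have Tn: "\<And>n j. 0 \<le> T n j" using uT un order_trans by blast
  have Tdec: "T (Suc n) i \<le> T n i" for n i
    unfolding T_def[of "Suc n"] by (rule cSUP_least) (use xT in auto)
  define tau where "tau i = (INF n. T n i)" for i
  have bddb: "bdd_below (range (\<lambda>n. T n i))" for i using uT by (auto simp: bdd_below_def)
  have Tlim: "(\<lambda>n. T n i) \<longlonglongrightarrow> tau i" for i unfolding tau_def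
    by (rule LIMSEQ_decseq_INF[OF bddb]) (rule decseq_SucI, rule Tdec)
  have ut: "u i \<le> tau i" for i unfolding tau_def by (rule cINF_greatest) (use uT in auto)
  have tK: "tau i \<le> K" for i
  proof -
    have "tau i \<le> T 0 i" unfolding tau_def by (rule cINF_lower[OF bddb]) simp
    then show ?thesis using TK[of 0 i] by simp
  qed
  have tn: "\<And>j. 0 \<le> tau j" using ut un order_trans by blast
  have TG: "T (Suc n) i \<le> Gb b (T n) i" for n i
    unfolding T_def[of "Suc n"]
  proof (rule cSUP_least)
    show "{Suc n..} \<noteq> {}" by simp
    fix k assume k: "k \<in> {Suc n..}"
    then obtain m where m: "k = Suc m" "n \<le> m" by (cases k) auto
    have "x m \<le> T n" using xT[OF m(2)] by (simp add: le_fun_def)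
    then have "Gb b (x m) \<le> Gb b (T n)" by (rule Gb_mono[OF xn _ order_refl])
    then show "x k i \<le> Gb b (T n) i" using m(1) by (simp add: x_def le_fun_def)
  qed
  have tG: "tau i \<le> Gb b tau i" for i
  proof (rule LIMSEQ_le_const)
    show "(\<lambda>n. Gb b (T n) i) \<longlonglongrightarrow> Gb b tau i"
      unfolding Gb_eq by (intro tendsto_max tendsto_const Gam_cont[OF Tn tn Tlim])
    show "\<exists>N. \<forall>n\<ge>N. tau i \<le> Gb b (T n) i"
    proof (intro exI allI impI)
      fix n
      have "tau i \<le> T (Suc n) i" unfolding tau_def by (rule cINF_lower[OF bddb]) simp
      then show "tau i \<le> Gb b (T n) i" using TG[of n i] by simp
    qed
  qed
  have tp: "tau \<in> linf_pos" by (rule linf_posI[where K=K]) (use tn tK in auto)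
  have "tau \<in> PP b" unfolding PP_def using tp tG by (simp add: le_fun_def)
  then have tu: "tau \<le> u" unfolding u_def by (rule P(3))
  have teq: "tau i = u i" for i using tu ut[of i] by (simp add: le_fun_def order.antisym)
  show ?thesis unfolding weak_star_conv_def
  proof (intro conjI exI allI)
    fix n i
    show "\<bar>(Gb b ^^ n) s i\<bar> \<le> K" using xK[of n i] xn[of n i] unfolding x_def by simp
  next
    fix i
    show "(\<lambda>n. (Gb b ^^ n) s i) \<longlonglongrightarrow> supp b i"
    proof (rule tendsto_sandwich[OF _ _ tendsto_const])
      show "\<forall>\<^sub>F n in sequentially. supp b i \<le> (Gb b ^^ n) s i"
        using xu' unfolding x_def u_def by simp
      show "\<forall>\<^sub>F n in sequentially. (Gb b ^^ n) s i \<le> T n i"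
        using xT[of n n i for n] unfolding x_def by simp
      show "(\<lambda>n. T n i) \<longlonglongrightarrow> supp b i" using Tlim[of i] teq[of i] unfolding u_def by simp
    qed
  qed
qed

end



theorem proposition3p6:
  fixes Ii :: "'i::countable \<Rightarrow> 'i set"
    and gam :: "'i \<Rightarrow> 'i \<Rightarrow> real \<Rightarrow> real"
    and mu :: "'i \<Rightarrow> ('i \<Rightarrow> real) \<Rightarrow> ereal"
  assumes "gain_operator Ii gam mu"
    and "MBI_oplus Ii gam mu"
  shows "\<exists>slow supp :: ('i \<Rightarrow> real) \<Rightarrow> ('i \<Rightarrow> real).
     (\<forall>b\<in>linf_pos.
        slow b \<in> Fix_pos (Gam_b Ii gam mu b) \<and> supp b \<in> Fix_pos (Gam_b Ii gam mu b)
      \<and> (\<forall>s\<in>Fix_pos (Gam_b Ii gam mu b). slow b \<le> s \<and> s \<le> supp b)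
      \<and> (\<forall>s\<in>linf_pos. s \<le> slow b \<longrightarrow>
            weak_star_conv (\<lambda>n. (Gam_b Ii gam mu b ^^ n) s) (slow b))
      \<and> (\<forall>s\<in>linf_pos. supp b \<le> s \<longrightarrow>
            weak_star_conv (\<lambda>n. (Gam_b Ii gam mu b ^^ n) s) (supp b)))
   \<and> (\<forall>b1\<in>linf_pos. \<forall>b2\<in>linf_pos. b1 \<le> b2 \<longrightarrow>
        slow b1 \<le> slow b2 \<and> supp b1 \<le> supp b2)"
proof -
  interpret GOM Ii gam mu by unfold_locales (rule assms)+
  show ?thesis
  proof (rule exI[of _ slow], rule exI[of _ supp], intro conjI ballI impI allI)
    fix b :: "'i \<Rightarrow> real" assume b: "b \<in> linf_pos"
    show "slow b \<in> Fix_pos (Gam_b Ii gam mu b)"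
      unfolding Fix_pos_def using slow_props(1,2)[OF b] by simp
  next
    fix b :: "'i \<Rightarrow> real" assume b: "b \<in> linf_pos"
    show "supp b \<in> Fix_pos (Gam_b Ii gam mu b)"
      unfolding Fix_pos_def using supp_props(1,2)[OF b] by simp
  next
    fix b s :: "'i \<Rightarrow> real" assume b: "b \<in> linf_pos" and "s \<in> Fix_pos (Gam_b Ii gam mu b)"
    then show "slow b \<le> s" using slow_props(5)[OF b] by blast
  next
    fix b s :: "'i \<Rightarrow> real" assume b: "b \<in> linf_pos" and "s \<in> Fix_pos (Gam_b Ii gam mu b)"
    then show "s \<le> supp b" using supp_props(3)[OF b] Fix_PP by blast
  next
    fix b s :: "'i \<Rightarrow> real" assume "b \<in> linf_pos" "s \<in> linf_pos" "s \<le> slow b"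
    then show "weak_star_conv (\<lambda>n. (Gam_b Ii gam mu b ^^ n) s) (slow b)" by (rule slow_conv)
  next
    fix b s :: "'i \<Rightarrow> real" assume "b \<in> linf_pos" "s \<in> linf_pos" "supp b \<le> s"
    then show "weak_star_conv (\<lambda>n. (Gam_b Ii gam mu b ^^ n) s) (supp b)" by (rule supp_conv)
  next
    fix b1 b2 :: "'i \<Rightarrow> real" assume "b1 \<in> linf_pos" "b2 \<in> linf_pos" "b1 \<le> b2"
    then show "slow b1 \<le> slow b2" "supp b1 \<le> supp b2" by (rule slow_mono, rule supp_mono)
  qed
qed

end
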